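(* Let $v$ be a weight on $[0,1)$ such that $\sup_{t\in[0,1)}\|C_t\|_{H^\infty_v\to H^\infty_v}<\infty$. Then $C_1$ maps $H^\infty_v$ into $H^\infty_v$ and $C_1\colon H^\infty_v\to H^\infty_v$ is continuous.
   Context: $\mathbb{D}=\{z\in\mathbb{C}:|z|<1\}$ and $H(\mathbb{D})$ is the space of holomorphic functions on $\mathbb{D}$. A weight is a continuous non-increasing function $v\colon[0,1)\to(0,\infty)$, extended to $\mathbb{D}$ by $v(z):=v(|z|)$. $H^\infty_v=\{f\in H(\mathbb{D}):\|f\|_{\infty,v}:=\sup_{z\in\mathbb{D}}|f(z)|v(z)<\infty\}$ with norm $\|\cdot\|_{\infty,v}$. For $t\in[0,1]$ the generalized Cesàro operator $C_t$ is defined on $f\in H(\mathbb{D})$ by $C_tf(0)=f(0)$ and $C_tf(z)=\frac{1}{z}\int_0^z\frac{f(\xi)}{1-t\xi}\,d\xi$ for $z\in\mathbb{D}\setminus\{0\}$; for $t\in[0,1)$, $C_t$ is a bounded operator on $H^\infty_v$. *)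

theory Defs
  imports "HOL-Complex_Analysis.Complex_Analysis"
begin

definition weight :: "(real \<Rightarrow> real) \<Rightarrow> bool" where
  "weight v \<longleftrightarrow> continuous_on {0..<1} v
     \<and> (\<forall>r\<in>{0..<1}. \<forall>s\<in>{0..<1}. r \<le> s \<longrightarrow> v s \<le> v r)
     \<and> (\<forall>r\<in>{0..<1}. 0 < v r)"

definition Hinf_v :: "(real \<Rightarrow> real) \<Rightarrow> (complex \<Rightarrow> complex) set" where
  "Hinf_v v = {f. f holomorphic_on ball 0 1
      \<and> (\<exists>C. \<forall>z\<in>ball 0 1. norm (f z) * v (norm z) \<le> C)}"

definition norm_v :: "(real \<Rightarrow> real) \<Rightarrow> (complex \<Rightarrow> complex) \<Rightarrow> real" where
  "norm_v v f = (SUP z\<in>ball 0 1. norm (f z) * v (norm z))"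

definition cesaro :: "real \<Rightarrow> (complex \<Rightarrow> complex) \<Rightarrow> complex \<Rightarrow> complex" where
  "cesaro t f z = (if z = 0 then f 0
     else (1 / z) * contour_integral (linepath 0 z) (\<lambda>\<xi>. f \<xi> / (1 - of_real t * \<xi>)))"

end

theory Submission
  imports Defs
begin

lemma denom_lb:
  assumes "0 \<le> t" "t \<le> 1"
  shows "1 - norm \<xi> \<le> norm (1 - complex_of_real t * \<xi>)"
proof -
  have "norm (complex_of_real t * \<xi>) \<le> norm \<xi>"
    using assms by (simp add: norm_mult mult_left_le_one_le)
  moreover have "norm (1::complex) - norm (complex_of_real t * \<xi>) \<le> norm (1 - complex_of_real t * \<xi>)"
    by (rule norm_triangle_ineq2)
  ultimately show ?thesis by simp
qed

lemma denom_nz: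
  assumes "0 \<le> t" "t \<le> 1" "\<xi> \<in> ball 0 1"
  shows "1 - complex_of_real t * \<xi> \<noteq> 0"
  using denom_lb[OF assms(1,2), of \<xi>] assms(3) by auto

lemma integrand_hol:
  assumes "f holomorphic_on ball 0 1" "0 \<le> t" "t \<le> 1"
  shows "(\<lambda>\<xi>. f \<xi> / (1 - of_real t * \<xi>)) holomorphic_on ball 0 1"
  using assms denom_nz by (intro holomorphic_intros) auto

lemma integrable_seg:
  assumes "f holomorphic_on ball 0 1" "0 \<le> t" "t \<le> 1" "z \<in> ball 0 1"
  shows "(\<lambda>\<xi>. f \<xi> / (1 - of_real t * \<xi>)) contour_integrable_on linepath 0 z"
proof (rule contour_integrable_continuous_linepath)
  have "closed_segment 0 z \<subseteq> ball 0 1"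
    using assms(4) by (intro closed_segment_subset) auto
  then show "continuous_on (closed_segment 0 z) (\<lambda>\<xi>. f \<xi> / (1 - of_real t * \<xi>))"
    using holomorphic_on_imp_continuous_on[OF integrand_hol[OF assms(1-3)]]
    by (rule continuous_on_subset[rotated])
qed

lemma prim:
  assumes "g holomorphic_on ball 0 1" "x \<in> ball 0 1"
  shows "((\<lambda>x. contour_integral (linepath 0 x) g) has_field_derivative g x) (at x)"
proof -
  have "((\<lambda>x. contour_integral (linepath 0 x) g) has_field_derivative g x) (at x within ball 0 1)"
  proof (rule triangle_contour_integrals_convex_primitive)
    show "continuous_on (ball 0 1) g" using assms(1) by (rule holomorphic_on_imp_continuous_on)
    fix b c assume bc: "b \<in> ball (0::complex) 1" "c \<in> ball (0::complex) 1"
    have "(g has_contour_integral 0) (linepath 0 b +++ linepath b c +++ linepath c 0)"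
    proof (rule Cauchy_theorem_convex_simple[OF assms(1)])
      have "path_image (linepath 0 b +++ linepath b c +++ linepath c 0) \<subseteq> ball 0 1"
      proof -
        have z0: "(0::complex) \<in> ball 0 1" by simp
        have "closed_segment 0 b \<subseteq> ball 0 1" "closed_segment b c \<subseteq> ball 0 1"
             "closed_segment c 0 \<subseteq> ball 0 1"
          using closed_segment_subset[OF z0 bc(1) convex_ball] closed_segment_subset[OF bc convex_ball]
            closed_segment_subset[OF bc(2) z0 convex_ball] by auto
        then show ?thesis by (simp only: path_image_join pathfinish_linepath pathstart_linepath
            pathstart_join path_image_linepath) blast
      qed
      then show "path_image (linepath 0 b +++ linepath b c +++ linepath c 0) \<subseteq> ball 0 1" .
    qed auto
    then show "contour_integral (linepath 0 b) g + contour_integral (linepath b c) g + contour_integral (linepath c 0) g = 0"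
      by (rule has_chain_integral_chain_integral3)
  qed (use assms in auto)
  then show ?thesis using at_within_open[OF assms(2) open_ball] by simp
qed

lemma hol1:
  assumes "f holomorphic_on ball 0 1"
  shows "cesaro 1 f holomorphic_on ball 0 1"
proof -
  define g where "g = (\<lambda>\<xi>. f \<xi> / (1 - of_real 1 * \<xi>))"
  define G where "G = (\<lambda>x. contour_integral (linepath 0 x) g)"
  have gh: "g holomorphic_on ball 0 1" unfolding g_def by (rule integrand_hol[OF assms]) auto
  have Gd: "(G has_field_derivative g x) (at x)" if "x \<in> ball 0 1" for x
    unfolding G_def by (rule prim[OF gh that])
  have Gh: "G holomorphic_on ball 0 1"
    using Gd by (meson holomorphic_on_open open_ball)
  have G0: "G 0 = 0" unfolding G_def by simp
  have dG0: "deriv G 0 = f 0"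
    using Gd[of 0] DERIV_imp_deriv by (simp add: g_def)
  have "(\<lambda>z. if z = 0 then deriv G 0 else (G z - G 0) / (z - 0)) holomorphic_on ball 0 1"
    by (rule pole_lemma[OF Gh]) (simp add: interior_open)
  moreover have "(\<lambda>z. if z = 0 then deriv G 0 else (G z - G 0) / (z - 0)) z = cesaro 1 f z" for z
    by (cases "z = 0") (simp_all add: cesaro_def G0 dG0, simp add: G_def g_def)
  ultimately show ?thesis by simp
qed


lemma denom_lb2:
  assumes "0 \<le> t" "t \<le> 1" "norm \<xi> \<le> 1"
  shows "1 - t \<le> norm (1 - complex_of_real t * \<xi>)"
proof -
  have "norm (complex_of_real t * \<xi>) \<le> t"
    using assms by (simp add: norm_mult mult_left_le)
  moreover have "norm (1::complex) - norm (complex_of_real t * \<xi>) \<le> norm (1 - complex_of_real t * \<xi>)"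
    by (rule norm_triangle_ineq2)
  ultimately show ?thesis by simp
qed

lemma seg_norm: "\<xi> \<in> closed_segment 0 z \<Longrightarrow> norm \<xi> \<le> norm z"
  using segment_bound1[of \<xi> 0 z] by simp

lemma Hinf_pt:
  assumes "f \<in> Hinf_v v" "z \<in> ball 0 1"
  shows "norm (f z) * v (norm z) \<le> norm_v v f"
proof -
  from assms(1) obtain C where "\<forall>z\<in>ball 0 1. norm (f z) * v (norm z) \<le> C"
    unfolding Hinf_v_def by auto
  then have "bdd_above ((\<lambda>z. norm (f z) * v (norm z)) ` ball 0 1)"
    by (auto intro: bdd_aboveI2)
  then show ?thesis unfolding norm_v_def using assms(2) by (rule cSUP_upper2) auto
qed

lemma norm_v_nonneg:
  assumes "weight v" "f \<in> Hinf_v v"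
  shows "0 \<le> norm_v v f"
proof -
  have "0 < v 0" using assms(1) unfolding weight_def by auto
  then have "0 \<le> norm (f 0) * v (norm (0::complex))"
    by simp
  also have "\<dots> \<le> norm_v v f" by (rule Hinf_pt[OF assms(2)]) auto
  finally show ?thesis .
qed

lemma Hinf_seg:
  assumes "weight v" "f \<in> Hinf_v v" "z \<in> ball 0 1" "\<xi> \<in> closed_segment 0 z"
  shows "norm (f \<xi>) \<le> norm_v v f / v (norm z)"
proof -
  have xz: "norm \<xi> \<le> norm z" by (rule seg_norm[OF assms(4)])
  then have xb: "\<xi> \<in> ball 0 1" using assms(3) by auto
  have vz: "0 < v (norm z)" using assms(1,3) unfolding weight_def by auto
  have "v (norm z) \<le> v (norm \<xi>)" using assms(1,3) xz xb unfolding weight_def by auto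
  then have "norm (f \<xi>) * v (norm z) \<le> norm (f \<xi>) * v (norm \<xi>)"
    by (simp add: mult_left_mono)
  also have "\<dots> \<le> norm_v v f" by (rule Hinf_pt[OF assms(2) xb])
  finally show ?thesis using vz by (simp add: pos_le_divide_eq)
qed

lemma Ct_bound:
  assumes "weight v" "f \<in> Hinf_v v" "z \<in> ball 0 1" "0 \<le> t" "t < 1"
  shows "norm (cesaro t f z) * v (norm z) \<le> norm_v v f / (1 - t)"
proof (cases "z = 0")
  case True
  have N0: "0 \<le> norm_v v f" by (rule norm_v_nonneg[OF assms(1,2)])
  have "norm (cesaro t f z) * v (norm z) \<le> norm_v v f"
    using Hinf_pt[OF assms(2,3)] True by (simp add: cesaro_def)
  also have "\<dots> \<le> norm_v v f / (1 - t)"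
    using N0 assms(4,5) by (simp add: le_divide_eq mult_left_le)
  finally show ?thesis .
next
  case False
  have hol: "f holomorphic_on ball 0 1" using assms(2) unfolding Hinf_v_def by auto
  have vz: "0 < v (norm z)" using assms(1,3) unfolding weight_def by auto
  define K where "K = norm_v v f / v (norm z)"
  have K0: "0 \<le> K" unfolding K_def using norm_v_nonneg[OF assms(1,2)] vz by simp
  have "norm (contour_integral (linepath 0 z) (\<lambda>\<xi>. f \<xi> / (1 - of_real t * \<xi>)))
        \<le> (K / (1 - t)) * norm (z - 0)"
  proof (rule contour_integral_bound_linepath)
    show "(\<lambda>\<xi>. f \<xi> / (1 - of_real t * \<xi>)) contour_integrable_on linepath 0 z"
      using integrable_seg[OF hol assms(4) _ assms(3)] assms(5) by simp
    show "0 \<le> K / (1 - t)" using K0 assms(5) by simp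
    fix \<xi> assume xs: "\<xi> \<in> closed_segment 0 z"
    have "norm \<xi> \<le> 1" using seg_norm[OF xs] assms(3) by simp
    then have d: "1 - t \<le> norm (1 - complex_of_real t * \<xi>)"
      using denom_lb2 assms(4,5) by simp
    have "norm (f \<xi>) \<le> K" unfolding K_def by (rule Hinf_seg[OF assms(1,2,3) xs])
    then show "norm (f \<xi> / (1 - of_real t * \<xi>)) \<le> K / (1 - t)"
      using d assms(5) K0 by (simp add: norm_divide frac_le)
  qed
  then have "norm (cesaro t f z) \<le> K / (1 - t)"
    using False by (simp add: cesaro_def norm_mult norm_divide divide_le_eq mult.commute)
  then have "norm (cesaro t f z) * v (norm z) \<le> K / (1 - t) * v (norm z)"
    using vz by (intro mult_right_mono) auto
  also have "\<dots> = norm_v v f / (1 - t)" unfolding K_def using vz by simp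
  finally show ?thesis .
qed

lemma Ct_le:
  assumes "weight v" "f \<in> Hinf_v v" "z \<in> ball 0 1" "0 \<le> t" "t < 1"
    and M: "\<forall>t\<in>{0..<1}. \<forall>f\<in>Hinf_v v. norm_v v (cesaro t f) \<le> M * norm_v v f"
  shows "norm (cesaro t f z) * v (norm z) \<le> M * norm_v v f"
proof -
  have "bdd_above ((\<lambda>z. norm (cesaro t f z) * v (norm z)) ` ball 0 1)"
    using Ct_bound[OF assms(1,2) _ assms(4,5)] by (meson bdd_aboveI2)
  then have "norm (cesaro t f z) * v (norm z) \<le> norm_v v (cesaro t f)"
    unfolding norm_v_def using assms(3) by (rule cSUP_upper2) auto
  also have "\<dots> \<le> M * norm_v v f" using M assms by auto
  finally show ?thesis .
qed

lemma diff_ident: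
  fixes a x :: complex and t :: real
  assumes "1 - of_real t * x \<noteq> 0" "1 - x \<noteq> 0"
  shows "a / (1 - of_real t * x) - a / (1 - of_real 1 * x) = a * ((of_real t - 1) * x) / ((1 - of_real t * x) * (1 - x))"
proof -
  have "a / (1 - of_real t * x) - a / (1 - x) = (a * (1 - x) - a * (1 - of_real t * x)) / ((1 - of_real t * x) * (1 - x))"
    using assms by (simp add: diff_frac_eq)
  also have "a * (1 - x) - a * (1 - of_real t * x) = a * ((of_real t - 1) * x)"
    by (simp add: algebra_simps)
  finally show ?thesis by simp
qed

lemma diff_bound:
  assumes "weight v" "f \<in> Hinf_v v" "z \<in> ball 0 1" "z \<noteq> 0" "0 \<le> t" "t \<le> 1"
  shows "norm (cesaro t f z - cesaro 1 f z)
     \<le> (1 - t) * (norm_v v f / v (norm z) / ((1 - norm z) * (1 - norm z)))"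
proof -
  have hol: "f holomorphic_on ball 0 1" using assms(2) unfolding Hinf_v_def by auto
  have vz: "0 < v (norm z)" using assms(1,3) unfolding weight_def by auto
  define K where "K = norm_v v f / v (norm z)"
  have K0: "0 \<le> K" unfolding K_def using norm_v_nonneg[OF assms(1,2)] vz by simp
  have z1: "norm z < 1" using assms(3) by simp
  define B where "B = (1 - t) * (K / ((1 - norm z) * (1 - norm z)))"
  have B0: "0 \<le> B" unfolding B_def using K0 z1 assms(6) by simp
  let ?gt = "\<lambda>\<xi>. f \<xi> / (1 - of_real t * \<xi>)"
  let ?g1 = "\<lambda>\<xi>. f \<xi> / (1 - of_real 1 * \<xi>)"
  have it: "?gt contour_integrable_on linepath 0 z"
    using integrable_seg[OF hol assms(5,6,3)] .
  have i1: "?g1 contour_integrable_on linepath 0 z"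
    using integrable_seg[OF hol _ _ assms(3), of 1] by simp
  have eq: "cesaro t f z - cesaro 1 f z
      = (1 / z) * contour_integral (linepath 0 z) (\<lambda>\<xi>. ?gt \<xi> - ?g1 \<xi>)"
    using assms(4) contour_integral_diff[OF it i1] by (simp add: cesaro_def right_diff_distrib)
  have "norm (contour_integral (linepath 0 z) (\<lambda>\<xi>. ?gt \<xi> - ?g1 \<xi>)) \<le> B * norm (z - 0)"
  proof (rule contour_integral_bound_linepath)
    show "(\<lambda>\<xi>. ?gt \<xi> - ?g1 \<xi>) contour_integrable_on linepath 0 z"
      by (rule contour_integrable_diff[OF it i1])
    show "0 \<le> B" by (rule B0)
    fix \<xi> assume xs: "\<xi> \<in> closed_segment 0 z"
    have xz: "norm \<xi> \<le> norm z" by (rule seg_norm[OF xs])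
    have dt: "1 - norm z \<le> norm (1 - complex_of_real t * \<xi>)"
      using denom_lb[OF assms(5,6), of \<xi>] xz by simp
    have d1: "1 - norm z \<le> norm (1 - \<xi>)"
      using denom_lb[of 1 \<xi>] xz by simp
    have nzt: "1 - complex_of_real t * \<xi> \<noteq> 0" using dt z1 by auto
    have nz1: "1 - \<xi> \<noteq> 0" using d1 z1 by auto
    have fx: "norm (f \<xi>) \<le> K" unfolding K_def by (rule Hinf_seg[OF assms(1,2,3) xs])
    have "?gt \<xi> - ?g1 \<xi> = f \<xi> * ((of_real t - 1) * \<xi>) / ((1 - of_real t * \<xi>) * (1 - \<xi>))"
      by (rule diff_ident[OF nzt nz1])
    moreover have nt: "norm (complex_of_real t - 1) = 1 - t"
    proof -
      have "norm (complex_of_real t - 1) = norm (complex_of_real (t - 1))" by simp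
      also have "\<dots> = \<bar>t - 1\<bar>" by (rule norm_of_real)
      also have "\<dots> = 1 - t" using assms(6) by arith
      finally show ?thesis .
    qed
    ultimately have "norm (?gt \<xi> - ?g1 \<xi>) = norm (f \<xi>) * ((1 - t) * norm \<xi>)
        / (norm (1 - complex_of_real t * \<xi>) * norm (1 - \<xi>))"
      by (simp add: norm_mult norm_divide)
    also have "\<dots> \<le> K * ((1 - t) * 1) / ((1 - norm z) * (1 - norm z))"
    proof (rule frac_le)
      show "0 \<le> K * ((1 - t) * 1)" using K0 assms(6) by simp
      show "norm (f \<xi>) * ((1 - t) * norm \<xi>) \<le> K * ((1 - t) * 1)"
      proof (rule mult_mono)
        show "(1 - t) * norm \<xi> \<le> (1 - t) * 1"
          using xz z1 assms(6) by (intro mult_left_mono) auto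
      qed (use fx K0 assms(6) in auto)
      show "0 < (1 - norm z) * (1 - norm z)" using z1 by simp
      show "(1 - norm z) * (1 - norm z) \<le> norm (1 - complex_of_real t * \<xi>) * norm (1 - \<xi>)"
        using dt d1 z1 by (intro mult_mono) auto
    qed
    also have "\<dots> = B" unfolding B_def by simp
    finally show "norm (?gt \<xi> - ?g1 \<xi>) \<le> B" .
  qed
  then have "norm (cesaro t f z - cesaro 1 f z) \<le> B"
    using assms(4) unfolding eq by (simp add: norm_mult norm_divide divide_le_eq mult.commute)
  then show ?thesis unfolding B_def K_def .
qed

theorem proposition2p11:
  fixes v :: "real \<Rightarrow> real"
  assumes "weight v"
    and "\<exists>M. \<forall>t\<in>{0..<1}. \<forall>f\<in>Hinf_v v. norm_v v (cesaro t f) \<le> M * norm_v v f"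
  shows "(\<forall>f\<in>Hinf_v v. cesaro 1 f \<in> Hinf_v v)
    \<and> (\<exists>M. \<forall>f\<in>Hinf_v v. norm_v v (cesaro 1 f) \<le> M * norm_v v f)"
proof -
  obtain M where M: "\<forall>t\<in>{0..<1}. \<forall>f\<in>Hinf_v v. norm_v v (cesaro t f) \<le> M * norm_v v f"
    using assms(2) by blast
  have pt: "norm (cesaro 1 f z) * v (norm z) \<le> M * norm_v v f"
    if f: "f \<in> Hinf_v v" and z: "z \<in> ball 0 1" for f z
  proof (cases "z = 0")
    case True
    have "cesaro 1 f z = cesaro 0 f z" using True by (simp add: cesaro_def)
    then show ?thesis using Ct_le[OF assms(1) f z _ _ M, of 0] by simp
  next
    case False
    have vz: "0 < v (norm z)" using assms(1) z unfolding weight_def by auto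
    define D where "D = norm_v v f / v (norm z) / ((1 - norm z) * (1 - norm z)) * v (norm z)"
    have D0: "0 \<le> D" unfolding D_def using norm_v_nonneg[OF assms(1) f] vz z by simp
    show ?thesis
    proof (rule field_le_epsilon)
      fix e :: real assume e: "0 < e"
      define t where "t = max 0 (1 - e / (D + 1))"
      have t0: "0 \<le> t" and t1: "t < 1" unfolding t_def using e D0 by auto
      have omt: "1 - t \<le> e / (D + 1)" unfolding t_def by simp
      have "(1 - t) * D \<le> e / (D + 1) * D"
        using omt D0 by (rule mult_right_mono)
      also have "\<dots> \<le> e" using e D0 by (simp add: divide_le_eq field_simps)
      finally have tD: "(1 - t) * D \<le> e" .
      have "norm (cesaro 1 f z) \<le> norm (cesaro t f z) + norm (cesaro t f z - cesaro 1 f z)"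
        by (metis add_diff_cancel_left' diff_add_cancel norm_minus_commute norm_triangle_ineq4)
      then have "norm (cesaro 1 f z) * v (norm z)
          \<le> norm (cesaro t f z) * v (norm z) + norm (cesaro t f z - cesaro 1 f z) * v (norm z)"
        using vz by (simp add: mult_right_mono flip: distrib_right)
      also have "\<dots> \<le> M * norm_v v f + (1 - t) * D"
      proof (rule add_mono)
        show "norm (cesaro t f z) * v (norm z) \<le> M * norm_v v f"
          by (rule Ct_le[OF assms(1) f z t0 t1 M])
        have "norm (cesaro t f z - cesaro 1 f z) * v (norm z)
           \<le> (1 - t) * (norm_v v f / v (norm z) / ((1 - norm z) * (1 - norm z))) * v (norm z)"
          using diff_bound[OF assms(1) f z False t0] t1 vz by (intro mult_right_mono) auto
        then show "norm (cesaro t f z - cesaro 1 f z) * v (norm z) \<le> (1 - t) * D"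
          unfolding D_def by (simp only: mult.assoc)
      qed
      also have "\<dots> \<le> M * norm_v v f + e" using tD by simp
      finally show "norm (cesaro 1 f z) * v (norm z) \<le> M * norm_v v f + e" .
    qed
  qed
  have mem: "cesaro 1 f \<in> Hinf_v v" if f: "f \<in> Hinf_v v" for f
  proof -
    have "f holomorphic_on ball 0 1" using f unfolding Hinf_v_def by auto
    then show ?thesis unfolding Hinf_v_def using hol1 pt[OF f] by blast
  qed
  have "norm_v v (cesaro 1 f) \<le> M * norm_v v f" if f: "f \<in> Hinf_v v" for f
    unfolding norm_v_def[of v "cesaro 1 f"] by (rule cSUP_least) (use pt[OF f] in auto)
  then show ?thesis using mem by blast
qed

end
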